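(* A lattice $L$ is isomorphic to a lattice of equational theories if and only if $L$ is isomorphic to the congruence lattice of a finite dimensional clone algebra (of some type).
   Context: A lattice of equational theories is a lattice of the form $L(T)$: the set of all equational theories (of some fixed type) containing a given equational theory $T$, ordered by inclusion. A clone $\tau$-algebra is an algebra $\mathbf C=(C,\sigma^{\mathbf C}\ (\sigma\in\tau),q_n^{\mathbf C}\ (n\ge0),\mathsf e_i^{\mathbf C}\ (i\ge1))$ with $\mathsf e_i$ nullary, $q_n$ of arity $n+1$, satisfying: (C1) $q_n(\mathsf e_i,x_1,\dots,x_n)=x_i$ ($1\le i\le n$); (C2) $q_n(\mathsf e_j,x_1,\dots,x_n)=\mathsf e_j$ ($j>n$); (C3) $q_n(x,\mathsf e_1,\dots,\mathsf e_n)=x$; (C4) $q_k(x,y_1,\dots,y_k)=q_n(x,y_1,\dots,y_k,\mathsf e_{k+1},\dots,\mathsf e_n)$ ($n>k$); (C5) $q_n(q_n(x,\mathbf y),\mathbf z)=q_n(x,q_n(y_1,\mathbf z),\dots,q_n(y_n,\mathbf z))$ with $\mathbf y,\mathbf z$ of length $n$; (C6) $q_n(\sigma(x_1,\dots,x_k),\mathbf y)=\sigma(q_n(x_1,\mathbf y),\dots,q_n(x_k,\mathbf y))$ for $\sigma\in\tau$ of arity $k$. A clone algebra is a clone $\tau$-algebra for some type $\tau$. An element $a$ is independent of $\mathsf e_n$ if $q_n(a,\mathsf e_1,\dots,\mathsf e_{n-1},\mathsf e_{n+1})=a$; the clone algebra is finite dimensional if each element is dependent on only finitely many $\mathsf e_n$.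 *)

theory Defs
  imports Main
begin

datatype 'f trm = Var nat | Fn 'f "'f trm list"

fun wf_trm :: "'f set \<Rightarrow> ('f \<Rightarrow> nat) \<Rightarrow> 'f trm \<Rightarrow> bool" where
  "wf_trm F ar (Var i) = True"
| "wf_trm F ar (Fn f ts) = (f \<in> F \<and> length ts = ar f \<and> (\<forall>t\<in>set ts. wf_trm F ar t))"

fun subst :: "(nat \<Rightarrow> 'f trm) \<Rightarrow> 'f trm \<Rightarrow> 'f trm" where
  "subst s (Var i) = s i"
| "subst s (Fn f ts) = Fn f (map (subst s) ts)"

text \<open>An equational theory of type (F, ar): a set of identities between terms of that type
  closed under the rules of equational deduction (reflexivity, symmetry, transitivity,
  replacement/compatibility and substitution), i.e. a fully invariant congruence of the term algebra.\<close>

definition eq_theory :: "'f set \<Rightarrow> ('f \<Rightarrow> nat) \<Rightarrow> ('f trm \<times> 'f trm) set \<Rightarrow> bool" where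
  "eq_theory F ar E \<longleftrightarrow>
     E \<subseteq> {(t, u). wf_trm F ar t \<and> wf_trm F ar u}
   \<and> (\<forall>t. wf_trm F ar t \<longrightarrow> (t, t) \<in> E)
   \<and> (\<forall>t u. (t, u) \<in> E \<longrightarrow> (u, t) \<in> E)
   \<and> (\<forall>t u v. (t, u) \<in> E \<longrightarrow> (u, v) \<in> E \<longrightarrow> (t, v) \<in> E)
   \<and> (\<forall>f ts us. f \<in> F \<longrightarrow> length ts = ar f \<longrightarrow> length us = ar f \<longrightarrow>
        list_all2 (\<lambda>t u. (t, u) \<in> E) ts us \<longrightarrow> (Fn f ts, Fn f us) \<in> E)
   \<and> (\<forall>s t u. (\<forall>i. wf_trm F ar (s i)) \<longrightarrow> (t, u) \<in> E \<longrightarrow> (subst s t, subst s u) \<in> E)"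

definition eq_theory_lattice :: "'f set \<Rightarrow> ('f \<Rightarrow> nat) \<Rightarrow> ('f trm \<times> 'f trm) set
    \<Rightarrow> ('f trm \<times> 'f trm) set set" where
  "eq_theory_lattice F ar T = {E. eq_theory F ar E \<and> T \<subseteq> E}"

text \<open>A clone (G, ar)-algebra with carrier A: basic operations sg (for symbols in G),
  q n x [y1,...,yn] for q_n, and nullary constants e i (i \<ge> 1).\<close>

definition clone_algebra ::
  "'g set \<Rightarrow> ('g \<Rightarrow> nat) \<Rightarrow> 'c set \<Rightarrow> ('g \<Rightarrow> 'c list \<Rightarrow> 'c)
     \<Rightarrow> (nat \<Rightarrow> 'c \<Rightarrow> 'c list \<Rightarrow> 'c) \<Rightarrow> (nat \<Rightarrow> 'c) \<Rightarrow> bool" where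
  "clone_algebra G ar A sg q e \<longleftrightarrow>
     (\<forall>\<sigma> xs. \<sigma> \<in> G \<longrightarrow> length xs = ar \<sigma> \<longrightarrow> set xs \<subseteq> A \<longrightarrow> sg \<sigma> xs \<in> A)
   \<and> (\<forall>n x ys. x \<in> A \<longrightarrow> length ys = n \<longrightarrow> set ys \<subseteq> A \<longrightarrow> q n x ys \<in> A)
   \<and> (\<forall>i. i \<ge> 1 \<longrightarrow> e i \<in> A)
   \<comment> \<open>(C1)\<close>
   \<and> (\<forall>n i xs. 1 \<le> i \<longrightarrow> i \<le> n \<longrightarrow> length xs = n \<longrightarrow> set xs \<subseteq> A \<longrightarrow> q n (e i) xs = xs ! (i - 1))
   \<comment> \<open>(C2)\<close>
   \<and> (\<forall>n j xs. j > n \<longrightarrow> length xs = n \<longrightarrow> set xs \<subseteq> A \<longrightarrow> q n (e j) xs = e j)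
   \<comment> \<open>(C3)\<close>
   \<and> (\<forall>n x. x \<in> A \<longrightarrow> q n x (map e [1..<n+1]) = x)
   \<comment> \<open>(C4)\<close>
   \<and> (\<forall>n k x ys. n > k \<longrightarrow> x \<in> A \<longrightarrow> length ys = k \<longrightarrow> set ys \<subseteq> A \<longrightarrow>
        q k x ys = q n x (ys @ map e [k+1..<n+1]))
   \<comment> \<open>(C5)\<close>
   \<and> (\<forall>n x ys zs. x \<in> A \<longrightarrow> length ys = n \<longrightarrow> set ys \<subseteq> A \<longrightarrow> length zs = n \<longrightarrow> set zs \<subseteq> A \<longrightarrow>
        q n (q n x ys) zs = q n x (map (\<lambda>y. q n y zs) ys))
   \<comment> \<open>(C6)\<close>
   \<and> (\<forall>\<sigma> n xs ys. \<sigma> \<in> G \<longrightarrow> length xs = ar \<sigma> \<longrightarrow> set xs \<subseteq> A \<longrightarrow> length ys = n \<longrightarrow> set ys \<subseteq> A \<longrightarrow>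
        q n (sg \<sigma> xs) ys = sg \<sigma> (map (\<lambda>x. q n x ys) xs))"

definition independent :: "(nat \<Rightarrow> 'c \<Rightarrow> 'c list \<Rightarrow> 'c) \<Rightarrow> (nat \<Rightarrow> 'c) \<Rightarrow> 'c \<Rightarrow> nat \<Rightarrow> bool" where
  "independent q e a n \<longleftrightarrow> q n a (map e [1..<n] @ [e (n + 1)]) = a"

definition finite_dimensional :: "'c set \<Rightarrow> (nat \<Rightarrow> 'c \<Rightarrow> 'c list \<Rightarrow> 'c) \<Rightarrow> (nat \<Rightarrow> 'c) \<Rightarrow> bool" where
  "finite_dimensional A q e \<longleftrightarrow> (\<forall>a\<in>A. finite {n. n \<ge> 1 \<and> \<not> independent q e a n})"

text \<open>Congruences of a clone algebra: equivalence relations on the carrier compatible with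
  all operations (the nullary e_i impose no condition).\<close>

definition clone_congruence ::
  "'g set \<Rightarrow> ('g \<Rightarrow> nat) \<Rightarrow> 'c set \<Rightarrow> ('g \<Rightarrow> 'c list \<Rightarrow> 'c)
     \<Rightarrow> (nat \<Rightarrow> 'c \<Rightarrow> 'c list \<Rightarrow> 'c) \<Rightarrow> ('c \<times> 'c) set \<Rightarrow> bool" where
  "clone_congruence G ar A sg q R \<longleftrightarrow>
     equiv A R
   \<and> (\<forall>\<sigma> xs ys. \<sigma> \<in> G \<longrightarrow> length xs = ar \<sigma> \<longrightarrow> list_all2 (\<lambda>x y. (x, y) \<in> R) xs ys \<longrightarrow>
        (sg \<sigma> xs, sg \<sigma> ys) \<in> R)
   \<and> (\<forall>n x x' ys ys'. (x, x') \<in> R \<longrightarrow> length ys = n \<longrightarrow> list_all2 (\<lambda>y y'. (y, y') \<in> R) ys ys' \<longrightarrow>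
        (q n x ys, q n x' ys') \<in> R)"

definition congruence_lattice ::
  "'g set \<Rightarrow> ('g \<Rightarrow> nat) \<Rightarrow> 'c set \<Rightarrow> ('g \<Rightarrow> 'c list \<Rightarrow> 'c)
     \<Rightarrow> (nat \<Rightarrow> 'c \<Rightarrow> 'c list \<Rightarrow> 'c) \<Rightarrow> ('c \<times> 'c) set set" where
  "congruence_lattice G ar A sg q = {R. clone_congruence G ar A sg q R}"

text \<open>The lattice 'a (a type of class lattice) is isomorphic to the lattice (S, \<subseteq>):
  a bijection that preserves and reflects the order (for lattices this is exactly a
  lattice isomorphism).\<close>

definition iso_to_set_lattice :: "'a::lattice itself \<Rightarrow> 'b set set \<Rightarrow> bool" where
  "iso_to_set_lattice _ S \<longleftrightarrow>
     (\<exists>h :: 'a \<Rightarrow> 'b set. bij_betw h UNIV S \<and> (\<forall>x y. x \<le> y \<longleftrightarrow> h x \<subseteq> h y))"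

end

theory Submission
  imports Defs
begin

fun vars :: "'f trm \<Rightarrow> nat set" where
  "vars (Var i) = {i}"
| "vars (Fn f ts) = \<Union> (vars ` set ts)"

lemma finite_vars: "finite (vars t)"
  by (induction t) auto

lemma subst_cong: "(\<forall>i\<in>vars t. s i = s' i) \<Longrightarrow> subst s t = subst s' t"
  by (induction t) auto

lemma subst_Var: "subst Var t = t"
  by (induction t) (auto intro: map_idI)

lemma subst_subst: "subst s (subst r t) = subst (subst s \<circ> r) t"
  by (induction t) auto

lemma wf_subst: "wf_trm F ar t \<Longrightarrow> (\<forall>i. wf_trm F ar (s i)) \<Longrightarrow> wf_trm F ar (subst s t)"
  by (induction t) auto

definition pad :: "'f trm list \<Rightarrow> nat \<Rightarrow> 'f trm" where
  "pad us i = (if i < length us then us ! i else Var i)"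

lemma wf_pad: "\<forall>u\<in>set us. wf_trm F ar u \<Longrightarrow> wf_trm F ar (pad us i)"
  by (auto simp: pad_def)

lemma eqtD:
  assumes "eq_theory F ar E"
  shows "E \<subseteq> {(t, u). wf_trm F ar t \<and> wf_trm F ar u}"
   "\<And>t. wf_trm F ar t \<Longrightarrow> (t, t) \<in> E"
   "\<And>t u. (t, u) \<in> E \<Longrightarrow> (u, t) \<in> E"
   "\<And>t u v. (t, u) \<in> E \<Longrightarrow> (u, v) \<in> E \<Longrightarrow> (t, v) \<in> E"
   "\<And>f ts us. f \<in> F \<Longrightarrow> length ts = ar f \<Longrightarrow> length us = ar f \<Longrightarrow>
        list_all2 (\<lambda>t u. (t, u) \<in> E) ts us \<Longrightarrow> (Fn f ts, Fn f us) \<in> E"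
   "\<And>s t u. (\<forall>i. wf_trm F ar (s i)) \<Longrightarrow> (t, u) \<in> E \<Longrightarrow> (subst s t, subst s u) \<in> E"
  using assms unfolding eq_theory_def by blast+

lemma eqt_wf: "eq_theory F ar E \<Longrightarrow> (t, u) \<in> E \<Longrightarrow> wf_trm F ar t \<and> wf_trm F ar u"
  using eqtD(1) by blast

lemma eqt_subst_right:
  assumes E: "eq_theory F ar E" and "wf_trm F ar t" and s: "\<forall>i. (s i, s' i) \<in> E"
  shows "(subst s t, subst s' t) \<in> E"
  using assms(2)
proof (induction t)
  case (Var i)
  then show ?case using s by simp
next
  case (Fn f ts)
  have "list_all2 (\<lambda>t u. (t, u) \<in> E) (map (subst s) ts) (map (subst s') ts)"
    using Fn by (auto simp: list_all2_conv_all_nth)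
  then show ?case using Fn eqtD(5)[OF E, of f "map (subst s) ts" "map (subst s') ts"] by auto
qed

lemma eqt_subst_compat:
  assumes E: "eq_theory F ar E" and tt: "(t, t') \<in> E" and s: "\<forall>i. (s i, s' i) \<in> E"
  shows "(subst s t, subst s' t') \<in> E"
proof -
  have ws: "\<forall>i. wf_trm F ar (s i)" using s eqt_wf[OF E] by blast
  have 1: "(subst s t, subst s t') \<in> E" using eqtD(6)[OF E ws tt] .
  have 2: "(subst s t', subst s' t') \<in> E"
    using eqt_subst_right[OF E _ s] eqt_wf[OF E tt] by blast
  show ?thesis using eqtD(4)[OF E 1 2] .
qed

lemma iso_transfer:
  assumes iso: "iso_to_set_lattice TYPE('a::lattice) S"
    and PhiS: "\<And>x. x \<in> S \<Longrightarrow> Phi x \<in> S'"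
    and PsiS: "\<And>y. y \<in> S' \<Longrightarrow> Psi y \<in> S"
    and PsiPhi: "\<And>x. x \<in> S \<Longrightarrow> Psi (Phi x) = x"
    and PhiPsi: "\<And>y. y \<in> S' \<Longrightarrow> Phi (Psi y) = y"
    and monoPhi: "\<And>x x'. x \<in> S \<Longrightarrow> x' \<in> S \<Longrightarrow> x \<subseteq> x' \<Longrightarrow> Phi x \<subseteq> Phi x'"
    and monoPsi: "\<And>y y'. y \<in> S' \<Longrightarrow> y' \<in> S' \<Longrightarrow> y \<subseteq> y' \<Longrightarrow> Psi y \<subseteq> Psi y'"
  shows "iso_to_set_lattice TYPE('a) S'"
proof -
  obtain h :: "'a \<Rightarrow> _" where h: "bij_betw h UNIV S" "\<And>x y. x \<le> y \<longleftrightarrow> h x \<subseteq> h y"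
    using iso unfolding iso_to_set_lattice_def by blast
  have hS: "h x \<in> S" for x using h(1) bij_betwE by blast
  have b: "bij_betw Phi S S'"
    by (rule bij_betw_byWitness[where f'=Psi]) (use PsiPhi PhiPsi PhiS PsiS in auto)
  have "bij_betw (Phi \<circ> h) UNIV S'" using bij_betw_trans[OF h(1) b] .
  moreover have "x \<le> y \<longleftrightarrow> (Phi \<circ> h) x \<subseteq> (Phi \<circ> h) y" for x y
  proof
    assume "x \<le> y" then show "(Phi \<circ> h) x \<subseteq> (Phi \<circ> h) y" using h(2) monoPhi hS by auto
  next
    assume "(Phi \<circ> h) x \<subseteq> (Phi \<circ> h) y"
    then have "Psi (Phi (h x)) \<subseteq> Psi (Phi (h y))" using monoPsi PhiS hS by auto
    then show "x \<le> y" using PsiPhi hS h(2) by auto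
  qed
  ultimately show ?thesis unfolding iso_to_set_lattice_def by blast
qed

locale D1 =
  fixes F :: "'f set" and ar :: "'f \<Rightarrow> nat" and T :: "('f trm \<times> 'f trm) set"
  assumes T: "eq_theory F ar T"
begin

abbreviation wf where "wf \<equiv> wf_trm F ar"

definition cls :: "'f trm \<Rightarrow> 'f trm set" where "cls t = {u. (t, u) \<in> T}"
definition AA :: "'f trm set set" where "AA = cls ` {t. wf t}"
definition rep :: "'f trm set \<Rightarrow> 'f trm" where "rep X = (SOME t. wf t \<and> X = cls t)"
definition sgA :: "'f \<Rightarrow> 'f trm set list \<Rightarrow> 'f trm set" where
  "sgA f Xs = cls (Fn f (map rep Xs))"
definition qA :: "nat \<Rightarrow> 'f trm set \<Rightarrow> 'f trm set list \<Rightarrow> 'f trm set" where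
  "qA n X Ys = cls (subst (pad (map rep Ys)) (rep X))"
definition eA :: "nat \<Rightarrow> 'f trm set" where "eA i = cls (Var (i - 1))"

lemma cls_eq: "wf t \<Longrightarrow> wf u \<Longrightarrow> cls t = cls u \<longleftrightarrow> (t, u) \<in> T"
proof
  assume w: "wf t" "wf u" and "cls t = cls u"
  then have "u \<in> cls t" using eqtD(2)[OF T] by (auto simp: cls_def)
  then show "(t, u) \<in> T" by (simp add: cls_def)
next
  assume "(t, u) \<in> T"
  then show "cls t = cls u" unfolding cls_def using eqtD(3,4)[OF T] by blast
qed

lemma rep: "X \<in> AA \<Longrightarrow> wf (rep X) \<and> cls (rep X) = X"
proof -
  assume "X \<in> AA"
  then have "\<exists>t. wf t \<and> X = cls t" by (auto simp: AA_def)
  then have "wf (rep X) \<and> X = cls (rep X)" unfolding rep_def by (rule someI_ex)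
  then show ?thesis by simp
qed

lemma rep_cls: "wf t \<Longrightarrow> (rep (cls t), t) \<in> T"
proof -
  assume w: "wf t"
  then have "cls t \<in> AA" by (simp add: AA_def)
  from rep[OF this] w show ?thesis using cls_eq by blast
qed

lemma cls_in: "wf t \<Longrightarrow> cls t \<in> AA" by (simp add: AA_def)

lemma list_cls: "set Xs \<subseteq> AA \<Longrightarrow> Xs = map cls (map rep Xs) \<and> (\<forall>u\<in>set (map rep Xs). wf u)"
  using rep by (induction Xs) auto

lemma sgA_cls: "\<forall>u\<in>set us. wf u \<Longrightarrow> f \<in> F \<Longrightarrow> length us = ar f \<Longrightarrow> sgA f (map cls us) = cls (Fn f us)"
proof -
  assume w: "\<forall>u\<in>set us. wf u" and f: "f \<in> F" "length us = ar f"
  have "list_all2 (\<lambda>t u. (t, u) \<in> T) (map rep (map cls us)) us"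
    using w rep_cls by (auto simp: list_all2_conv_all_nth)
  then have "(Fn f (map rep (map cls us)), Fn f us) \<in> T"
    using eqtD(5)[OF T] f by simp
  then show ?thesis unfolding sgA_def using cls_eq eqt_wf[OF T] by blast
qed

lemma qA_cls: "\<forall>u\<in>set us. wf u \<Longrightarrow> wf t \<Longrightarrow> qA n (cls t) (map cls us) = cls (subst (pad us) t)"
proof -
  assume w: "\<forall>u\<in>set us. wf u" and wt: "wf t"
  have "\<forall>i. (pad (map rep (map cls us)) i, pad us i) \<in> T"
    using w rep_cls eqtD(2)[OF T] by (auto simp: pad_def)
  then have "(subst (pad (map rep (map cls us))) (rep (cls t)), subst (pad us) t) \<in> T"
    using eqt_subst_compat[OF T rep_cls[OF wt]] by blast
  then show ?thesis unfolding qA_def using cls_eq eqt_wf[OF T] by blast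
qed

lemma map_eA: "map eA [a+1..<b+1] = map cls (map Var [a..<b])"
proof -
  have "[a+1..<b+1] = map Suc [a..<b]" by (simp add: map_Suc_upt)
  then show ?thesis by (simp add: eA_def comp_def)
qed

lemma pad_Var: "pad (map Var [0..<n]) = Var"
  by (auto simp: pad_def fun_eq_iff)

lemma pad_app: "length us = k \<Longrightarrow> pad (us @ map Var [k..<n]) = pad us"
  by (auto simp: pad_def fun_eq_iff nth_append)

lemma pad_comp: "length ws = length us \<Longrightarrow>
   subst (pad ws) \<circ> pad us = pad (map (subst (pad ws)) us)"
  by (auto simp: pad_def fun_eq_iff)

lemma wf_list: "\<forall>u\<in>set us. wf u \<Longrightarrow> \<forall>u\<in>set ws. wf u \<Longrightarrow> \<forall>u\<in>set (us @ ws). wf u"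
  by auto

lemma clone: "clone_algebra F ar AA sgA qA eA"
  unfolding clone_algebra_def
proof (intro conjI allI impI)
  fix \<sigma> xs assume "\<sigma> \<in> F" "length xs = ar \<sigma>" "set xs \<subseteq> AA"
  then show "sgA \<sigma> xs \<in> AA" unfolding sgA_def using list_cls[of xs]
    by (intro cls_in) auto
next
  fix n x ys assume "x \<in> AA" "length ys = n" "set ys \<subseteq> AA"
  then show "qA n x ys \<in> AA" unfolding qA_def using list_cls[of ys] rep[of x]
    by (intro cls_in wf_subst allI wf_pad) auto
next
  fix i :: nat assume "1 \<le> i" then show "eA i \<in> AA" by (simp add: eA_def cls_in)
next
  fix n i xs assume "1 \<le> i" "i \<le> n" "length xs = n" "set xs \<subseteq> AA"
  then obtain us where us: "xs = map cls us" "\<forall>u\<in>set us. wf u" using list_cls by blast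
  show "qA n (eA i) xs = xs ! (i - 1)"
    using us qA_cls[OF us(2), of "Var (i - 1)"] \<open>1 \<le> i\<close> \<open>i \<le> n\<close> \<open>length xs = n\<close>
    by (auto simp: eA_def pad_def)
next
  fix n j xs assume "n < j" "length xs = n" "set xs \<subseteq> AA"
  then obtain us where us: "xs = map cls us" "\<forall>u\<in>set us. wf u" using list_cls by blast
  show "qA n (eA j) xs = eA j"
    using us qA_cls[OF us(2), of "Var (j - 1)"] \<open>n < j\<close> \<open>length xs = n\<close>
    by (auto simp: eA_def pad_def)
next
  fix n x assume "x \<in> AA"
  then obtain t where t: "x = cls t" "wf t" using rep by metis
  have "qA n x (map eA [1..<n+1]) = qA n (cls t) (map cls (map Var [0..<n]))"
    using t map_eA[of 0 n] by simp
  also have "\<dots> = cls t" by (subst qA_cls) (auto simp: t pad_Var subst_Var)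
  finally show "qA n x (map eA [1..<n+1]) = x" using t by simp
next
  fix n k x ys assume "k < n" "x \<in> AA" "length ys = k" "set ys \<subseteq> AA"
  then obtain us where us: "ys = map cls us" "\<forall>u\<in>set us. wf u" using list_cls by blast
  obtain t where t: "x = cls t" "wf t" using rep \<open>x \<in> AA\<close> by metis
  have "qA n x (ys @ map eA [k+1..<n+1]) = qA n (cls t) (map cls (us @ map Var [k..<n]))"
    using t us map_eA by simp
  also have "\<dots> = cls (subst (pad us) t)"
    using us \<open>length ys = k\<close> by (subst qA_cls) (auto simp: t pad_app)
  also have "\<dots> = qA k x ys" using qA_cls us t by simp
  finally show "qA k x ys = qA n x (ys @ map eA [k+1..<n+1])" by simp
next
  fix n x ys zs assume a: "x \<in> AA" "length ys = n" "set ys \<subseteq> AA" "length zs = n" "set zs \<subseteq> AA"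
  then obtain us where us: "ys = map cls us" "\<forall>u\<in>set us. wf u" using list_cls by blast
  obtain ws where ws: "zs = map cls ws" "\<forall>u\<in>set ws. wf u" using list_cls a by blast
  obtain t where t: "x = cls t" "wf t" using rep \<open>x \<in> AA\<close> by metis
  have wsub: "\<forall>u\<in>set (map (subst (pad ws)) us). wf u" using us ws by (auto intro: wf_subst wf_pad)
  have "qA n (qA n x ys) zs = cls (subst (pad ws) (subst (pad us) t))"
    using t us ws by (simp add: qA_cls wf_subst wf_pad)
  also have "\<dots> = cls (subst (pad (map (subst (pad ws)) us)) t)"
    using a us ws by (simp add: subst_subst pad_comp)
  also have "\<dots> = qA n (cls t) (map cls (map (subst (pad ws)) us))"
    by (rule qA_cls[OF wsub t(2), symmetric])
  also have "map cls (map (subst (pad ws)) us) = map (\<lambda>y. qA n y zs) ys"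
    using us ws by (auto simp: qA_cls)
  finally show "qA n (qA n x ys) zs = qA n x (map (\<lambda>y. qA n y zs) ys)" using t by simp
next
  fix \<sigma> n xs ys assume a: "\<sigma> \<in> F" "length xs = ar \<sigma>" "set xs \<subseteq> AA" "length ys = n" "set ys \<subseteq> AA"
  then obtain ts where ts: "xs = map cls ts" "\<forall>u\<in>set ts. wf u" using list_cls by blast
  obtain us where us: "ys = map cls us" "\<forall>u\<in>set us. wf u" using list_cls a by blast
  have wsub: "\<forall>u\<in>set (map (subst (pad us)) ts). wf u" using us ts by (auto intro: wf_subst wf_pad)
  have "qA n (sgA \<sigma> xs) ys = cls (Fn \<sigma> (map (subst (pad us)) ts))"
    using a ts us by (simp add: sgA_cls qA_cls)
  also have "\<dots> = sgA \<sigma> (map cls (map (subst (pad us)) ts))"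
    using a ts by (intro sgA_cls[OF wsub, symmetric]) auto
  also have "map cls (map (subst (pad us)) ts) = map (\<lambda>x. qA n x ys) xs"
    using us ts by (auto simp: qA_cls)
  finally show "qA n (sgA \<sigma> xs) ys = sgA \<sigma> (map (\<lambda>x. qA n x ys) xs)" .
qed

lemma fin_dim: "finite_dimensional AA qA eA"
  unfolding finite_dimensional_def
proof
  fix X assume "X \<in> AA"
  then obtain t where t: "X = cls t" "wf t" using rep by metis
  have "{n. n \<ge> 1 \<and> \<not> independent qA eA X n} \<subseteq> Suc ` vars t"
  proof (rule subsetI, rule ccontr)
    fix n assume n: "n \<in> {n. n \<ge> 1 \<and> \<not> independent qA eA X n}" and nv: "n \<notin> Suc ` vars t"
    then have n1: "n \<ge> 1" by simp
    have nv': "n - 1 \<notin> vars t" using nv n1 by (metis Suc_diff_1 image_eqI less_le_trans zero_less_one)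
    have L: "map eA [1..<n] @ [eA (n + 1)] = map cls (map Var [0..<n - 1] @ [Var n])"
      using map_eA[of 0 "n - 1"] n1 by (simp add: eA_def)
    have "qA n X (map eA [1..<n] @ [eA (n + 1)]) = cls (subst (pad (map Var [0..<n - 1] @ [Var n])) t)"
      unfolding L t(1) by (rule qA_cls) (use t in auto)
    also have "subst (pad (map Var [0..<n - 1] @ [Var n])) t = subst Var t"
    proof (intro subst_cong ballI)
      fix i assume "i \<in> vars t"
      then have "i \<noteq> n - 1" using nv' by auto
      then show "pad (map Var [0..<n - 1] @ [Var n]) i = Var i"
        using n1 by (cases "i < n - 1") (auto simp: pad_def nth_append)
    qed
    finally have "independent qA eA X n" using t by (simp add: independent_def subst_Var)
    then show False using n by simp
  qed
  then show "finite {n. n \<ge> 1 \<and> \<not> independent qA eA X n}"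
    using finite_vars finite_surj by blast
qed

definition PhiE :: "('f trm \<times> 'f trm) set \<Rightarrow> ('f trm set \<times> 'f trm set) set" where
  "PhiE E = {(cls t, cls u) | t u. (t, u) \<in> E}"
definition PsiR :: "('f trm set \<times> 'f trm set) set \<Rightarrow> ('f trm \<times> 'f trm) set" where
  "PsiR R = {(t, u). wf t \<and> wf u \<and> (cls t, cls u) \<in> R}"

lemma list_PhiE: "list_all2 (\<lambda>x y. (x, y) \<in> PhiE E) xs ys \<Longrightarrow>
   \<exists>ts us. xs = map cls ts \<and> ys = map cls us \<and> list_all2 (\<lambda>t u. (t, u) \<in> E) ts us"
proof (induction rule: list_all2_induct)
  case Nil then show ?case by auto
next
  case (Cons x xs y ys)
  then obtain ts us where "xs = map cls ts" "ys = map cls us" "list_all2 (\<lambda>t u. (t, u) \<in> E) ts us"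
    by blast
  moreover obtain t u where "x = cls t" "y = cls u" "(t, u) \<in> E" using Cons(1) by (auto simp: PhiE_def)
  ultimately show ?case by (intro exI[of _ "t # ts"] exI[of _ "u # us"]) auto
qed

lemma wf_of_list:
  assumes "eq_theory F ar E" "list_all2 (\<lambda>t u. (t, u) \<in> E) ts us"
  shows "(\<forall>u\<in>set ts. wf u) \<and> (\<forall>u\<in>set us. wf u)"
  using assms(2) by (induction rule: list_all2_induct) (auto dest: eqt_wf[OF assms(1)])

lemma PhiE_cong:
  assumes E: "E \<in> eq_theory_lattice F ar T"
  shows "clone_congruence F ar AA sgA qA (PhiE E)"
proof -
  have Et: "eq_theory F ar E" and TE: "T \<subseteq> E" using E by (auto simp: eq_theory_lattice_def)
  have eqv: "equiv AA (PhiE E)"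
  proof (rule equivI)
    show "PhiE E \<subseteq> AA \<times> AA" using eqt_wf[OF Et] cls_in by (auto simp: PhiE_def)
    show "refl_on AA (PhiE E)" unfolding refl_on_def PhiE_def AA_def using eqtD(2)[OF Et] by blast
    show "sym (PhiE E)" unfolding sym_def PhiE_def using eqtD(3)[OF Et] by blast
    show "trans (PhiE E)"
    proof (rule transI)
      fix x y z assume "(x, y) \<in> PhiE E" "(y, z) \<in> PhiE E"
      then obtain t u u' v where a: "x = cls t" "y = cls u" "(t, u) \<in> E" "y = cls u'" "z = cls v"
        "(u', v) \<in> E" by (auto simp: PhiE_def)
      then have "(u, u') \<in> T" using cls_eq eqt_wf[OF Et] by metis
      then have "(u, u') \<in> E" using TE by blast
      then have "(t, v) \<in> E" using a eqtD(4)[OF Et] by blast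
      then show "(x, z) \<in> PhiE E" using a by (auto simp: PhiE_def)
    qed
  qed
  moreover have "(sgA \<sigma> xs, sgA \<sigma> ys) \<in> PhiE E"
    if hh: "\<sigma> \<in> F" "length xs = ar \<sigma>" "list_all2 (\<lambda>x y. (x, y) \<in> PhiE E) xs ys" for \<sigma> xs ys
  proof -
    obtain ts us where tu: "xs = map cls ts" "ys = map cls us" "list_all2 (\<lambda>t u. (t, u) \<in> E) ts us"
      using list_PhiE[OF hh(3)] by blast
    have l: "length ts = ar \<sigma>" "length us = ar \<sigma>" using tu that list_all2_lengthD by fastforce+
    have w: "\<forall>u\<in>set ts. wf u" "\<forall>u\<in>set us. wf u" using wf_of_list[OF Et tu(3)] by auto
    have "(Fn \<sigma> ts, Fn \<sigma> us) \<in> E" using eqtD(5)[OF Et hh(1) l tu(3)] .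
    then show ?thesis using tu sgA_cls[OF w(1) hh(1) l(1)] sgA_cls[OF w(2) hh(1) l(2)]
      by (auto simp: PhiE_def)
  qed
  moreover have "(qA n x ys, qA n x' ys') \<in> PhiE E"
    if hh: "(x, x') \<in> PhiE E" "length ys = n" "list_all2 (\<lambda>y y'. (y, y') \<in> PhiE E) ys ys'" for n x x' ys ys'
  proof -
    obtain us us' where tu: "ys = map cls us" "ys' = map cls us'" "list_all2 (\<lambda>t u. (t, u) \<in> E) us us'"
      using list_PhiE[OF hh(3)] by blast
    obtain t t' where tt: "x = cls t" "x' = cls t'" "(t, t') \<in> E" using hh(1) by (auto simp: PhiE_def)
    have w: "\<forall>u\<in>set us. wf u" "\<forall>u\<in>set us'. wf u" using wf_of_list[OF Et tu(3)] by auto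
    have wt: "wf t" "wf t'" using eqt_wf[OF Et tt(3)] by auto
    have "\<forall>i. (pad us i, pad us' i) \<in> E"
      using tu(3) eqtD(2)[OF Et] by (auto simp: pad_def list_all2_conv_all_nth)
    then have "(subst (pad us) t, subst (pad us') t') \<in> E" using eqt_subst_compat[OF Et tt(3)] by blast
    then show ?thesis using tu tt qA_cls[OF w(1) wt(1)] qA_cls[OF w(2) wt(2)]
      by (auto simp: PhiE_def)
  qed
  ultimately show ?thesis unfolding clone_congruence_def by blast
qed

lemma R_AA: "clone_congruence F ar AA sgA qA R \<Longrightarrow> R \<subseteq> AA \<times> AA"
  unfolding clone_congruence_def equiv_def by blast

lemma PsiR_eqt:
  assumes R: "clone_congruence F ar AA sgA qA R"
  shows "PsiR R \<in> eq_theory_lattice F ar T"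
proof -
  have eqv: "equiv AA R" and sgc: "\<And>\<sigma> xs ys. \<sigma> \<in> F \<Longrightarrow> length xs = ar \<sigma> \<Longrightarrow>
      list_all2 (\<lambda>x y. (x, y) \<in> R) xs ys \<Longrightarrow> (sgA \<sigma> xs, sgA \<sigma> ys) \<in> R"
    and qc: "\<And>n x x' ys ys'. (x, x') \<in> R \<Longrightarrow> length ys = n \<Longrightarrow>
      list_all2 (\<lambda>y y'. (y, y') \<in> R) ys ys' \<Longrightarrow> (qA n x ys, qA n x' ys') \<in> R"
    using R unfolding clone_congruence_def by blast+
  have refl: "wf t \<Longrightarrow> (cls t, cls t) \<in> R" for t
    using eqv cls_in unfolding equiv_def refl_on_def by blast
  have sym: "(x, y) \<in> R \<Longrightarrow> (y, x) \<in> R" for x y using eqv unfolding equiv_def sym_def by blast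
  have trans: "(x, y) \<in> R \<Longrightarrow> (y, z) \<in> R \<Longrightarrow> (x, z) \<in> R" for x y z
    using eqv unfolding equiv_def trans_def by blast
  have "eq_theory F ar (PsiR R)"
    unfolding eq_theory_def
  proof (intro conjI allI impI)
    show "PsiR R \<subseteq> {(t, u). wf t \<and> wf u}" by (auto simp: PsiR_def)
  next
    fix t assume "wf t" then show "(t, t) \<in> PsiR R" using refl by (auto simp: PsiR_def)
  next
    fix t u assume "(t, u) \<in> PsiR R" then show "(u, t) \<in> PsiR R" using sym by (auto simp: PsiR_def)
  next
    fix t u v assume "(t, u) \<in> PsiR R" "(u, v) \<in> PsiR R"
    then show "(t, v) \<in> PsiR R" using trans by (auto simp: PsiR_def)
  next
    fix f ts us assume a: "f \<in> F" "length ts = ar f" "length us = ar f"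
      "list_all2 (\<lambda>t u. (t, u) \<in> PsiR R) ts us"
    have w: "\<forall>u\<in>set ts. wf u" "\<forall>u\<in>set us. wf u" using a(4)
      by (auto simp: PsiR_def list_all2_conv_all_nth in_set_conv_nth)
    have "list_all2 (\<lambda>x y. (x, y) \<in> R) (map cls ts) (map cls us)"
      using a(4) by (auto simp: PsiR_def list_all2_conv_all_nth)
    then have "(sgA f (map cls ts), sgA f (map cls us)) \<in> R" using sgc a by simp
    then show "(Fn f ts, Fn f us) \<in> PsiR R"
      using sgA_cls[OF w(1) a(1,2)] sgA_cls[OF w(2) a(1,3)] a w by (auto simp: PsiR_def)
  next
    fix s :: "nat \<Rightarrow> 'f trm" and t u assume ws: "\<forall>i. wf (s i)" and tu: "(t, u) \<in> PsiR R"
    have wt: "wf t" "wf u" and R1: "(cls t, cls u) \<in> R" using tu by (auto simp: PsiR_def)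
    obtain N where N: "\<forall>i\<in>vars t \<union> vars u. i < N"
      using finite_vars[of t] finite_vars[of u] finite_nat_set_iff_bounded by (metis finite_UnI)
    have eqs: "subst s t = subst (pad (map s [0..<N])) t" "subst s u = subst (pad (map s [0..<N])) u"
      using N by (auto intro!: subst_cong simp: pad_def)
    have wl: "\<forall>v\<in>set (map s [0..<N]). wf v" using ws by auto
    have "list_all2 (\<lambda>y y'. (y, y') \<in> R) (map cls (map s [0..<N])) (map cls (map s [0..<N]))"
      using refl ws by (auto simp: list_all2_conv_all_nth)
    then have "(qA N (cls t) (map cls (map s [0..<N])), qA N (cls u) (map cls (map s [0..<N]))) \<in> R"
      using qc[OF R1] by simp
    then show "(subst s t, subst s u) \<in> PsiR R"
      unfolding eqs qA_cls[OF wl wt(1)] qA_cls[OF wl wt(2)] using wt wl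
      by (auto simp: PsiR_def intro!: wf_subst wf_pad)
  qed
  moreover have "T \<subseteq> PsiR R"
  proof
    fix p assume p: "p \<in> T"
    then obtain a b where ab: "p = (a, b)" "wf a" "wf b" using eqt_wf[OF T] by (cases p) auto
    then have "cls a = cls b" using cls_eq p by auto
    then show "p \<in> PsiR R" using refl ab by (auto simp: PsiR_def)
  qed
  ultimately show ?thesis by (simp add: eq_theory_lattice_def)
qed

lemma PsiPhi: "E \<in> eq_theory_lattice F ar T \<Longrightarrow> PsiR (PhiE E) = E"
proof -
  assume E: "E \<in> eq_theory_lattice F ar T"
  have Et: "eq_theory F ar E" and TE: "T \<subseteq> E" using E by (auto simp: eq_theory_lattice_def)
  show ?thesis
  proof
    show "E \<subseteq> PsiR (PhiE E)" using eqt_wf[OF Et] by (auto simp: PsiR_def PhiE_def)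
  next
    show "PsiR (PhiE E) \<subseteq> E"
    proof clarify
      fix t u assume "(t, u) \<in> PsiR (PhiE E)"
      then obtain t' u' where a: "wf t" "wf u" "cls t = cls t'" "cls u = cls u'" "(t', u') \<in> E"
        by (auto simp: PsiR_def PhiE_def)
      have "(t, t') \<in> E" "(u', u) \<in> E"
        using a cls_eq eqt_wf[OF Et a(5)] TE eqtD(3)[OF T] by blast+
      then show "(t, u) \<in> E" using a(5) eqtD(4)[OF Et] by blast
    qed
  qed
qed

lemma PhiPsi: "clone_congruence F ar AA sgA qA R \<Longrightarrow> PhiE (PsiR R) = R"
proof -
  assume R: "clone_congruence F ar AA sgA qA R"
  show ?thesis
  proof
    show "PhiE (PsiR R) \<subseteq> R" by (auto simp: PsiR_def PhiE_def)
  next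
    show "R \<subseteq> PhiE (PsiR R)"
    proof clarify
      fix x y assume xy: "(x, y) \<in> R"
      then have "x \<in> AA" "y \<in> AA" using R_AA[OF R] by auto
      then obtain t u where "x = cls t" "wf t" "y = cls u" "wf u" using rep by metis
      then show "(x, y) \<in> PhiE (PsiR R)" using xy by (auto simp: PsiR_def PhiE_def)
    qed
  qed
qed

lemma dir1:
  assumes "iso_to_set_lattice TYPE('a::lattice) (eq_theory_lattice F ar T)"
  shows "iso_to_set_lattice TYPE('a) (congruence_lattice F ar AA sgA qA)"
proof (rule iso_transfer[OF assms, where Phi = PhiE and Psi = PsiR])
  show "\<And>x. x \<in> eq_theory_lattice F ar T \<Longrightarrow> PhiE x \<in> congruence_lattice F ar AA sgA qA"
    by (simp add: congruence_lattice_def PhiE_cong)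
  show "\<And>y. y \<in> congruence_lattice F ar AA sgA qA \<Longrightarrow> PsiR y \<in> eq_theory_lattice F ar T"
    by (simp add: congruence_lattice_def PsiR_eqt)
  show "\<And>x. x \<in> eq_theory_lattice F ar T \<Longrightarrow> PsiR (PhiE x) = x" by (rule PsiPhi)
  show "\<And>y. y \<in> congruence_lattice F ar AA sgA qA \<Longrightarrow> PhiE (PsiR y) = y"
    by (simp add: congruence_lattice_def PhiPsi)
  show "\<And>x x'. x \<subseteq> x' \<Longrightarrow> PhiE x \<subseteq> PhiE x'" by (auto simp: PhiE_def)
  show "\<And>y y'. y \<subseteq> y' \<Longrightarrow> PsiR y \<subseteq> PsiR y'" by (auto simp: PsiR_def)
qed

end

locale D2 =
  fixes G :: "'g set" and ar :: "'g \<Rightarrow> nat" and A :: "'c set" and sg :: "'g \<Rightarrow> 'c list \<Rightarrow> 'c"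
    and q :: "nat \<Rightarrow> 'c \<Rightarrow> 'c list \<Rightarrow> 'c" and e :: "nat \<Rightarrow> 'c"
  assumes CA: "clone_algebra G ar A sg q e" and FD: "finite_dimensional A q e"
begin

lemmas CAs = CA[unfolded clone_algebra_def]

lemma sgA: "\<sigma> \<in> G \<Longrightarrow> length xs = ar \<sigma> \<Longrightarrow> set xs \<subseteq> A \<Longrightarrow> sg \<sigma> xs \<in> A"
  using CAs[THEN conjunct1] by blast

lemma qA: "x \<in> A \<Longrightarrow> length ys = n \<Longrightarrow> set ys \<subseteq> A \<Longrightarrow> q n x ys \<in> A"
  using CAs[THEN conjunct2, THEN conjunct1] by blast

lemma eA: "i \<ge> 1 \<Longrightarrow> e i \<in> A"
  using CAs[THEN conjunct2, THEN conjunct2, THEN conjunct1] by blast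

lemma C1: "1 \<le> i \<Longrightarrow> i \<le> n \<Longrightarrow> length xs = n \<Longrightarrow> set xs \<subseteq> A \<Longrightarrow> q n (e i) xs = xs ! (i - 1)"
  using CAs[THEN conjunct2, THEN conjunct2, THEN conjunct2, THEN conjunct1] by blast

lemma C2: "j > n \<Longrightarrow> length xs = n \<Longrightarrow> set xs \<subseteq> A \<Longrightarrow> q n (e j) xs = e j"
  using CAs[THEN conjunct2, THEN conjunct2, THEN conjunct2, THEN conjunct2, THEN conjunct1] by blast

lemma C3: "x \<in> A \<Longrightarrow> q n x (map e [1..<n+1]) = x"
  using CAs[THEN conjunct2, THEN conjunct2, THEN conjunct2, THEN conjunct2, THEN conjunct2, THEN conjunct1] by blast

lemma C4: "n > k \<Longrightarrow> x \<in> A \<Longrightarrow> length ys = k \<Longrightarrow> set ys \<subseteq> A \<Longrightarrow>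
        q k x ys = q n x (ys @ map e [k+1..<n+1])"
  using CAs[THEN conjunct2, THEN conjunct2, THEN conjunct2, THEN conjunct2, THEN conjunct2, THEN conjunct2, THEN conjunct1] by blast

lemma C5: "x \<in> A \<Longrightarrow> length ys = n \<Longrightarrow> set ys \<subseteq> A \<Longrightarrow> length zs = n \<Longrightarrow> set zs \<subseteq> A \<Longrightarrow>
        q n (q n x ys) zs = q n x (map (\<lambda>y. q n y zs) ys)"
  using CAs[THEN conjunct2, THEN conjunct2, THEN conjunct2, THEN conjunct2, THEN conjunct2, THEN conjunct2, THEN conjunct2, THEN conjunct1] by blast

lemma C6: "\<sigma> \<in> G \<Longrightarrow> length xs = ar \<sigma> \<Longrightarrow> set xs \<subseteq> A \<Longrightarrow> length ys = n \<Longrightarrow> set ys \<subseteq> A \<Longrightarrow>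
        q n (sg \<sigma> xs) ys = sg \<sigma> (map (\<lambda>x. q n x ys) xs)"
  using CAs[THEN conjunct2, THEN conjunct2, THEN conjunct2, THEN conjunct2, THEN conjunct2, THEN conjunct2, THEN conjunct2, THEN conjunct2] by blast

lemma set_Es: "set (map e [a..<b]) \<subseteq> A" if "a \<ge> 1" using that eA by auto

lemma indep_any:
  assumes c: "c \<in> A" and n: "n \<ge> 1" and ind: "independent q e c n" and y: "y \<in> A"
  shows "q n c (map e [1..<n] @ [y]) = c"
proof -
  let ?E = "map e [1..<n] @ [y]" and ?L = "map e [1..<n] @ [e (n + 1)]"
  have lE: "length ?E = n" "set ?E \<subseteq> A" using n y eA by auto
  have lL: "length ?L = n" "set ?L \<subseteq> A" using n eA by auto
  have cL: "q n c ?L = c" using ind by (simp add: independent_def)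
  have "map (\<lambda>z. q n z ?E) ?L = ?L"
  proof (rule nth_equalityI)
    show "length (map (\<lambda>z. q n z ?E) ?L) = length ?L" by simp
    fix i assume "i < length (map (\<lambda>z. q n z ?E) ?L)"
    then have i: "i < n" using lL by simp
    have nm: "map (\<lambda>z. q n z ?E) ?L ! i = q n (?L ! i) ?E" by (rule nth_map) (use lL i in simp)
    show "map (\<lambda>z. q n z ?E) ?L ! i = ?L ! i"
      unfolding nm
    proof (cases "i < n - 1")
      case True
      then have "?L ! i = e (i + 1)" "?E ! i = e (i + 1)" by (auto simp: nth_append)
      then show "q n (?L ! i) ?E = ?L ! i" using C1[of "i + 1" n ?E] lE i by auto
    next
      case False
      then have "i = n - 1" using i by simp
      then have "?L ! i = e (n + 1)" using n by (simp add: nth_append)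
      then show "q n (?L ! i) ?E = ?L ! i" using C2[of n "n + 1" ?E] lE i by auto
    qed
  qed
  moreover have "q n (q n c ?L) ?E = q n c (map (\<lambda>z. q n z ?E) ?L)" by (rule C5[OF c lL lE])
  ultimately have "q n (q n c ?L) ?E = q n c ?L" by (simp only:)
  then show ?thesis using cL by (simp only:)
qed

definition Em :: "nat \<Rightarrow> 'c list" where "Em m = map e [1..<m+1]"

lemma Em_len: "length (Em m) = m" and Em_A: "set (Em m) \<subseteq> A" and Em_nth: "i < m \<Longrightarrow> Em m ! i = e (i + 1)"
  using eA by (auto simp: Em_def nth_append simp del: upt_Suc)

lemma indep_upd:
  assumes c: "c \<in> A" and j: "1 \<le> j" "j \<le> m" and ind: "independent q e c j" and y: "y \<in> A"
  shows "q m c ((Em m)[j - 1 := y]) = c"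
proof (cases "j = m")
  case True
  have "(Em m)[j - 1 := y] = map e [1..<j] @ [y]"
    using True j by (intro nth_equalityI) (auto simp: Em_len Em_nth nth_append nth_list_update)
  then show ?thesis using indep_any[OF c j(1) ind y] True by simp
next
  case False
  then have jm: "j < m" using j by simp
  have "q j c (map e [1..<j] @ [y]) = q m c ((map e [1..<j] @ [y]) @ map e [j+1..<m+1])"
    by (rule C4[OF jm c]) (use j y eA in auto)
  also have "(map e [1..<j] @ [y]) @ map e [j+1..<m+1] = (Em m)[j - 1 := y]"
    using jm j by (intro nth_equalityI) (auto simp: Em_len Em_nth nth_append nth_list_update simp del: upt_Suc)
  finally show ?thesis using indep_any[OF c j(1) ind y] by simp
qed

lemma indep_swap:
  assumes c: "c \<in> A" and j: "1 \<le> j" "j \<le> m" and ind: "independent q e c j"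
    and zs: "length zs = m" "set zs \<subseteq> A" and w: "w \<in> A"
  shows "q m c zs = q m c (zs[j - 1 := w])"
proof -
  have key: "q m c xs = q m c (xs[j - 1 := e (m + 1)])" if xs: "length xs = m" "set xs \<subseteq> A" for xs
  proof -
    let ?U = "(Em m)[j - 1 := e (m + 1)]"
    have U: "length ?U = m" "set ?U \<subseteq> A" using Em_len Em_A eA set_update_subset_insert by fastforce+
    have "map (\<lambda>z. q m z xs) ?U = xs[j - 1 := e (m + 1)]"
    proof (rule nth_equalityI)
      show "length (map (\<lambda>z. q m z xs) ?U) = length (xs[j - 1 := e (m + 1)])" using U xs by simp
      fix i assume "i < length (map (\<lambda>z. q m z xs) ?U)"
      then have i: "i < m" using U by simp
      show "map (\<lambda>z. q m z xs) ?U ! i = xs[j - 1 := e (m + 1)] ! i"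
      proof (cases "i = j - 1")
        case True then show ?thesis using C2[of m "m + 1" xs] xs i U by (simp add: Em_len)
      next
        case False then show ?thesis using C1[of "i + 1" m xs] xs i U by (simp add: Em_len Em_nth)
      qed
    qed
    moreover have "q m c ?U = c" using indep_upd[OF c j ind] eA by simp
    ultimately show ?thesis using C5[OF c U xs] by simp
  qed
  have zw: "length (zs[j - 1 := w]) = m" "set (zs[j - 1 := w]) \<subseteq> A"
    using zs w set_update_subset_insert by fastforce+
  show ?thesis using key[OF zs] key[OF zw] by simp
qed

lemma agree:
  assumes c: "c \<in> A" and ind: "\<forall>n>k. independent q e c n"
  shows "d \<le> m - k \<Longrightarrow> length zs = m \<Longrightarrow> set zs \<subseteq> A \<Longrightarrow> length zs' = m \<Longrightarrow> set zs' \<subseteq> A \<Longrightarrow>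
    \<forall>i < m - d. zs ! i = zs' ! i \<Longrightarrow> q m c zs = q m c zs'"
proof (induction d arbitrary: zs)
  case 0
  then have "zs = zs'" by (intro nth_equalityI) auto
  then show ?case by simp
next
  case (Suc d)
  let ?p = "m - d"
  have p: "?p > k" "1 \<le> ?p" "?p \<le> m" using Suc.prems(1) by auto
  have pm: "?p - 1 < length zs'" using p Suc.prems(4) by simp
  have w: "zs' ! (?p - 1) \<in> A" using nth_mem[OF pm] Suc.prems(5) by blast
  have ip: "independent q e c ?p" using ind p(1) by blast
  have "q m c zs = q m c (zs[?p - 1 := zs' ! (?p - 1)])"
    by (rule indep_swap[OF c p(2,3) ip Suc.prems(2,3) w])
  also have "\<dots> = q m c zs'"
  proof (rule Suc.IH)
    show "d \<le> m - k" using Suc.prems by simp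
    show "length (zs[?p - 1 := zs' ! (?p - 1)]) = m" using Suc.prems by simp
    show "set (zs[?p - 1 := zs' ! (?p - 1)]) \<subseteq> A"
      using Suc.prems(3) w set_update_subset_insert[of zs "?p - 1" "zs' ! (?p - 1)"] by blast
    show "\<forall>i<m - d. zs[?p - 1 := zs' ! (?p - 1)] ! i = zs' ! i"
    proof (intro allI impI)
      fix i assume i: "i < m - d"
      show "zs[?p - 1 := zs' ! (?p - 1)] ! i = zs' ! i"
      proof (cases "i = ?p - 1")
        case True then show ?thesis using pm Suc.prems(2,4) by simp
      next
        case False
        then have "i < m - Suc d" using i by simp
        then show ?thesis using False Suc.prems(6) by simp
      qed
    qed
    show "length zs' = m" by (rule Suc.prems(4))
    show "set zs' \<subseteq> A" by (rule Suc.prems(5))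
  qed
  finally show ?case .
qed

lemma L1:
  assumes c: "c \<in> A" and ind: "\<forall>n>k. independent q e c n" and km: "k \<le> m"
    and zs: "length zs = m" "set zs \<subseteq> A"
  shows "q m c zs = q k c (take k zs)"
proof -
  let ?z = "take k zs @ map e [k+1..<m+1]"
  have z: "length ?z = m" "set ?z \<subseteq> A" using zs km set_Es[of "k+1" "m+1"] set_take_subset[of k zs] by auto
  have "q m c zs = q m c ?z"
    by (rule agree[OF c ind, of "m - k"]) (use zs z km in \<open>auto simp: nth_append\<close>)
  also have "\<dots> = q k c (take k zs)"
  proof (cases "k = m")
    case True then show ?thesis using zs by simp
  next
    case False
    then show ?thesis using C4[of k m c "take k zs"] km c zs set_take_subset[of k zs] by auto
  qed
  finally show ?thesis .
qed

lemma Qlem: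
  assumes c: "c \<in> A" and ind: "\<forall>n>k. independent q e c n"
    and xs: "length xs = k" "set xs \<subseteq> A" and ys: "length ys = N" "set ys \<subseteq> A"
  shows "q N (q k c xs) ys = q k c (map (\<lambda>x. q N x ys) xs)"
proof -
  define M where "M = k + N + 1"
  define ys' where "ys' = ys @ map e [N+1..<M+1]"
  define xs' where "xs' = xs @ map e [k+1..<M+1]"
  have ys': "length ys' = M" "set ys' \<subseteq> A" using ys set_Es[of "N+1" "M+1"] by (auto simp: ys'_def M_def)
  have xs': "length xs' = M" "set xs' \<subseteq> A" using xs set_Es[of "k+1" "M+1"] by (auto simp: xs'_def M_def)
  have h1: "q k c xs = q M c xs'" unfolding xs'_def by (rule C4) (use c xs in \<open>auto simp: M_def\<close>)
  have h2: "q N x ys = q M x ys'" if "x \<in> A" for x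
    unfolding ys'_def by (rule C4) (use that ys in \<open>auto simp: M_def\<close>)
  have qc: "q k c xs \<in> A" using qA c xs by blast
  have "q N (q k c xs) ys = q M (q M c xs') ys'" using h1 h2[OF qc] by simp
  also have "\<dots> = q M c (map (\<lambda>z. q M z ys') xs')" by (rule C5[OF c xs' ys'])
  also have "map (\<lambda>z. q M z ys') xs' = map (\<lambda>x. q N x ys) xs @ map (\<lambda>z. q M z ys') (map e [k+1..<M+1])"
    using h2 xs by (auto simp: xs'_def)
  also have "q M c \<dots> = q k c (take k (map (\<lambda>x. q N x ys) xs @ map (\<lambda>z. q M z ys') (map e [k+1..<M+1])))"
  proof (rule L1[OF c ind])
    show "k \<le> M" by (simp add: M_def)
    show "length (map (\<lambda>x. q N x ys) xs @ map (\<lambda>z. q M z ys') (map e [k+1..<M+1])) = M"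
      using xs by (simp add: M_def)
    have "set (map (\<lambda>x. q N x ys) xs) \<subseteq> A" using xs ys qA by auto
    moreover have "set (map (\<lambda>z. q M z ys') (map e [k+1..<M+1])) \<subseteq> A"
      using ys' qA eA by auto
    ultimately show "set (map (\<lambda>x. q N x ys) xs @ map (\<lambda>z. q M z ys') (map e [k+1..<M+1])) \<subseteq> A"
      by simp
  qed
  also have "\<dots> = q k c (map (\<lambda>x. q N x ys) xs)" using xs by simp
  finally show ?thesis .
qed

definition Dep :: "'c \<Rightarrow> nat set" where "Dep c = {n. n \<ge> 1 \<and> \<not> independent q e c n}"
definition dim :: "'c \<Rightarrow> nat" where "dim c = (if Dep c = {} then 0 else Max (Dep c))"

lemma dim_indep: "c \<in> A \<Longrightarrow> \<forall>n > dim c. independent q e c n"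
proof (intro allI impI, rule ccontr)
  fix n assume c: "c \<in> A" and n: "n > dim c" and ni: "\<not> independent q e c n"
  then have nD: "n \<in> Dep c" by (auto simp: Dep_def)
  have "finite (Dep c)" using FD c unfolding finite_dimensional_def Dep_def by blast
  then have "n \<le> dim c" using nD by (auto simp: dim_def)
  then show False using n by simp
qed

definition FF :: "('g + 'c) set" where "FF = Inl ` G \<union> Inr ` A"
definition arF :: "('g + 'c) \<Rightarrow> nat" where "arF = case_sum ar dim"

abbreviation wf where "wf \<equiv> wf_trm FF arF"

lemma FF_simps[simp]: "Inl \<sigma> \<in> FF \<longleftrightarrow> \<sigma> \<in> G" "Inr c \<in> FF \<longleftrightarrow> c \<in> A"
  and arF_simps[simp]: "arF (Inl \<sigma>) = ar \<sigma>" "arF (Inr c) = dim c"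
  by (auto simp: FF_def arF_def)

fun eval :: "('g + 'c) trm \<Rightarrow> 'c" where
  "eval (Var i) = e (Suc i)"
| "eval (Fn (Inl \<sigma>) ts) = sg \<sigma> (map eval ts)"
| "eval (Fn (Inr c) ts) = q (length ts) c (map eval ts)"

lemma eval_A: "wf t \<Longrightarrow> eval t \<in> A"
proof (induction t rule: eval.induct)
  case (1 i) then show ?case using eA by simp
next
  case (2 \<sigma> ts)
  then have "set (map eval ts) \<subseteq> A" by auto
  then show ?case using 2 by (auto intro!: sgA)
next
  case (3 c ts)
  then have "set (map eval ts) \<subseteq> A" by auto
  then show ?case using 3 qA[of c "map eval ts" "dim c"] by auto
qed

lemma evals_A: "\<forall>u\<in>set us. wf u \<Longrightarrow> set (map eval us) \<subseteq> A"
  using eval_A by auto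

lemma eval_subst:
  assumes "wf t" and ws: "\<forall>i. wf (s i)" and N: "\<forall>i\<in>vars t. i < N"
  shows "eval (subst s t) = q N (eval t) (map (eval \<circ> s) [0..<N])"
  using assms(1) N
proof (induction t rule: eval.induct)
  let ?L = "map (eval \<circ> s) [0..<N]"
  have L: "length ?L = N" "set ?L \<subseteq> A" using ws eval_A by auto
  {
    case (1 i)
    then show ?case using C1[of "Suc i" N ?L] L by (simp add: comp_def)
  next
    case (2 \<sigma> ts)
    have "map (eval \<circ> subst s) ts = map (\<lambda>t. q N (eval t) ?L) ts"
      by (rule map_cong[OF refl]) (use 2 in \<open>auto simp: comp_def\<close>)
    then have "eval (subst s (Fn (Inl \<sigma>) ts)) = sg \<sigma> (map (\<lambda>t. q N (eval t) ?L) ts)"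
      by (simp del: map_eq_conv)
    also have "\<dots> = sg \<sigma> (map (\<lambda>x. q N x ?L) (map eval ts))" by (simp add: comp_def)
    also have "\<dots> = q N (sg \<sigma> (map eval ts)) ?L"
      using 2 L by (intro C6[symmetric]) (auto intro: eval_A)
    finally show ?case by (simp add: comp_def)
  next
    case (3 c ts)
    have "map (eval \<circ> subst s) ts = map (\<lambda>t. q N (eval t) ?L) ts"
      by (rule map_cong[OF refl]) (use 3 in \<open>auto simp: comp_def\<close>)
    then have "eval (subst s (Fn (Inr c) ts)) = q (length ts) c (map (\<lambda>t. q N (eval t) ?L) ts)"
      by (simp del: map_eq_conv)
    also have "\<dots> = q (length ts) c (map (\<lambda>x. q N x ?L) (map eval ts))" by (simp add: comp_def)
    also have "\<dots> = q N (q (length ts) c (map eval ts)) ?L"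
      using 3 L dim_indep[of c] by (intro Qlem[symmetric]) (auto intro: eval_A)
    finally show ?case by (simp add: comp_def)
  }
qed

lemma eval_pad:
  assumes t: "wf t" and us: "\<forall>u\<in>set us. wf u"
  shows "q (length us) (eval t) (map eval us) = eval (subst (pad us) t)"
proof -
  obtain N0 where N0: "\<forall>i\<in>vars t. i < N0"
    using finite_vars[of t] finite_nat_set_iff_bounded by blast
  define n where "n = length us"
  define M where "M = N0 + n + 1"
  have "q n (eval t) (map eval us) = q M (eval t) (map eval us @ map e [n+1..<M+1])"
    by (rule C4) (use t us eval_A in \<open>auto simp: M_def n_def\<close>)
  also have "map eval us @ map e [n+1..<M+1] = map (eval \<circ> pad us) [0..<M]"
  proof (rule nth_equalityI)
    show "length (map eval us @ map e [n + 1..<M + 1]) = length (map (eval \<circ> pad us) [0..<M])"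
      by (simp add: M_def n_def del: upt_Suc)
    fix i assume "i < length (map eval us @ map e [n + 1..<M + 1])"
    then have i: "i < M" by (simp add: M_def n_def del: upt_Suc)
    show "(map eval us @ map e [n + 1..<M + 1]) ! i = map (eval \<circ> pad us) [0..<M] ! i"
      using i by (cases "i < n") (auto simp: nth_append pad_def n_def M_def simp del: upt_Suc)
  qed
  also have "q M (eval t) (map (eval \<circ> pad us) [0..<M]) = eval (subst (pad us) t)"
    by (rule eval_subst[symmetric]) (use t us N0 in \<open>auto intro: wf_pad simp: M_def\<close>)
  finally show ?thesis by (simp add: n_def)
qed

lemma eval_surj: "c \<in> A \<Longrightarrow> \<exists>t. wf t \<and> eval t = c"
proof -
  assume c: "c \<in> A"
  let ?t = "Fn (Inr c) (map Var [0..<dim c])"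
  have "wf ?t" using c by simp
  moreover have "[1..<dim c + 1] = map Suc [0..<dim c]" by (simp add: map_Suc_upt)
  then have "map eval (map Var [0..<dim c]) = map e [1..<dim c + 1]" by simp
  then have "eval ?t = c" using C3[OF c, of "dim c"] by simp
  ultimately show ?thesis by blast
qed

definition TT :: "(('g + 'c) trm \<times> ('g + 'c) trm) set" where
  "TT = {(t, u). wf t \<and> wf u \<and> eval t = eval u}"

definition PhiR :: "('c \<times> 'c) set \<Rightarrow> (('g + 'c) trm \<times> ('g + 'c) trm) set" where
  "PhiR R = {(t, u). wf t \<and> wf u \<and> (eval t, eval u) \<in> R}"
definition PsiE :: "(('g + 'c) trm \<times> ('g + 'c) trm) set \<Rightarrow> ('c \<times> 'c) set" where
  "PsiE E = {(eval t, eval u) | t u. (t, u) \<in> E}"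

lemma PhiR_eqt:
  assumes R: "clone_congruence G ar A sg q R"
  shows "eq_theory FF arF (PhiR R)"
proof -
  have eqv: "equiv A R" and sgc: "\<And>\<sigma> xs ys. \<sigma> \<in> G \<Longrightarrow> length xs = ar \<sigma> \<Longrightarrow>
      list_all2 (\<lambda>x y. (x, y) \<in> R) xs ys \<Longrightarrow> (sg \<sigma> xs, sg \<sigma> ys) \<in> R"
    and qc: "\<And>n x x' ys ys'. (x, x') \<in> R \<Longrightarrow> length ys = n \<Longrightarrow>
      list_all2 (\<lambda>y y'. (y, y') \<in> R) ys ys' \<Longrightarrow> (q n x ys, q n x' ys') \<in> R"
    using R unfolding clone_congruence_def by blast+
  have refl: "x \<in> A \<Longrightarrow> (x, x) \<in> R" for x
    using eqv unfolding equiv_def refl_on_def by blast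
  have sym: "(x, y) \<in> R \<Longrightarrow> (y, x) \<in> R" for x y using eqv unfolding equiv_def sym_def by blast
  have trans: "(x, y) \<in> R \<Longrightarrow> (y, z) \<in> R \<Longrightarrow> (x, z) \<in> R" for x y z
    using eqv unfolding equiv_def trans_def by blast
  show ?thesis
    unfolding eq_theory_def
  proof (intro conjI allI impI)
    show "PhiR R \<subseteq> {(t, u). wf t \<and> wf u}" by (auto simp: PhiR_def)
  next
    fix t assume "wf t" then show "(t, t) \<in> PhiR R" using refl eval_A by (auto simp: PhiR_def)
  next
    fix t u assume "(t, u) \<in> PhiR R" then show "(u, t) \<in> PhiR R" using sym by (auto simp: PhiR_def)
  next
    fix t u v assume "(t, u) \<in> PhiR R" "(u, v) \<in> PhiR R"
    then show "(t, v) \<in> PhiR R" using trans by (auto simp: PhiR_def)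
  next
    fix f ts us assume a: "f \<in> FF" "length ts = arF f" "length us = arF f"
      "list_all2 (\<lambda>t u. (t, u) \<in> PhiR R) ts us"
    have w: "\<forall>u\<in>set ts. wf u" "\<forall>u\<in>set us. wf u" using a(4)
      by (auto simp: PhiR_def list_all2_conv_all_nth in_set_conv_nth)
    have L: "list_all2 (\<lambda>x y. (x, y) \<in> R) (map eval ts) (map eval us)"
      using a(4) by (auto simp: PhiR_def list_all2_conv_all_nth)
    show "(Fn f ts, Fn f us) \<in> PhiR R"
    proof (cases f)
      case (Inl \<sigma>)
      then have "(sg \<sigma> (map eval ts), sg \<sigma> (map eval us)) \<in> R" using sgc L a by simp
      then show ?thesis using Inl a w by (auto simp: PhiR_def)
    next
      case (Inr c)
      then have "(c, c) \<in> R" using refl a by simp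
      then have "(q (length ts) c (map eval ts), q (length ts) c (map eval us)) \<in> R"
        using qc L by simp
      moreover have "length us = length ts" using a by simp
      ultimately show ?thesis using Inr a w by (auto simp: PhiR_def)
    qed
  next
    fix s :: "nat \<Rightarrow> ('g + 'c) trm" and t u assume ws: "\<forall>i. wf (s i)" and tu: "(t, u) \<in> PhiR R"
    have wt: "wf t" "wf u" and R1: "(eval t, eval u) \<in> R" using tu by (auto simp: PhiR_def)
    obtain N where N: "\<forall>i\<in>vars t \<union> vars u. i < N"
      using finite_vars[of t] finite_vars[of u] finite_nat_set_iff_bounded by (metis finite_UnI)
    have "list_all2 (\<lambda>y y'. (y, y') \<in> R) (map (eval \<circ> s) [0..<N]) (map (eval \<circ> s) [0..<N])"
      using refl ws eval_A by (auto simp: list_all2_conv_all_nth)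
    then have "(q N (eval t) (map (eval \<circ> s) [0..<N]), q N (eval u) (map (eval \<circ> s) [0..<N])) \<in> R"
      using qc[OF R1] by simp
    then show "(subst s t, subst s u) \<in> PhiR R"
      using eval_subst[OF wt(1) ws, of N] eval_subst[OF wt(2) ws, of N] N wt ws
      by (auto simp: PhiR_def intro!: wf_subst)
  qed
qed

lemma Id_cong: "clone_congruence G ar A sg q (Id_on A)"
  unfolding clone_congruence_def
proof (intro conjI allI impI)
  show "equiv A (Id_on A)" by (rule equivI) (auto simp: refl_on_def sym_def trans_def)
next
  fix \<sigma> xs ys assume a: "\<sigma> \<in> G" "length xs = ar \<sigma>" "list_all2 (\<lambda>x y. (x, y) \<in> Id_on A) xs ys"
  then have "xs = ys" "set xs \<subseteq> A" by (auto simp: list_all2_conv_all_nth list_eq_iff_nth_eq in_set_conv_nth)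
  then show "(sg \<sigma> xs, sg \<sigma> ys) \<in> Id_on A" using sgA a by auto
next
  fix n x x' ys ys' assume a: "(x, x') \<in> Id_on A" "length ys = n" "list_all2 (\<lambda>y y'. (y, y') \<in> Id_on A) ys ys'"
  then have "ys = ys'" "set ys \<subseteq> A" by (auto simp: list_all2_conv_all_nth list_eq_iff_nth_eq in_set_conv_nth)
  then show "(q n x ys, q n x' ys') \<in> Id_on A" using qA a by auto
qed

lemma TT_eq: "TT = PhiR (Id_on A)"
  using eval_A by (auto simp: TT_def PhiR_def)

lemma TT_eqt: "eq_theory FF arF TT"
  unfolding TT_eq by (rule PhiR_eqt[OF Id_cong])

lemma PhiR_in: "clone_congruence G ar A sg q R \<Longrightarrow> PhiR R \<in> eq_theory_lattice FF arF TT"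
proof -
  assume R: "clone_congruence G ar A sg q R"
  have "(x, x) \<in> R" if "x \<in> A" for x
    using R that unfolding clone_congruence_def equiv_def refl_on_def by blast
  then have "TT \<subseteq> PhiR R" using eval_A by (auto simp: TT_def PhiR_def)
  then show ?thesis using PhiR_eqt[OF R] by (simp add: eq_theory_lattice_def)
qed

lemma list_PsiE: "list_all2 (\<lambda>x y. (x, y) \<in> PsiE E) xs ys \<Longrightarrow>
   \<exists>ts us. xs = map eval ts \<and> ys = map eval us \<and> list_all2 (\<lambda>t u. (t, u) \<in> E) ts us"
proof (induction rule: list_all2_induct)
  case Nil then show ?case by auto
next
  case (Cons x xs y ys)
  then obtain ts us where "xs = map eval ts" "ys = map eval us" "list_all2 (\<lambda>t u. (t, u) \<in> E) ts us"
    by blast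
  moreover obtain t u where "x = eval t" "y = eval u" "(t, u) \<in> E" using Cons(1) by (auto simp: PsiE_def)
  ultimately show ?case by (intro exI[of _ "t # ts"] exI[of _ "u # us"]) auto
qed

lemma wf_of_list:
  assumes "eq_theory FF arF E" "list_all2 (\<lambda>t u. (t, u) \<in> E) ts us"
  shows "(\<forall>u\<in>set ts. wf u) \<and> (\<forall>u\<in>set us. wf u)"
  using assms(2) by (induction rule: list_all2_induct) (auto dest: eqt_wf[OF assms(1)])

lemma PsiE_cong:
  assumes E: "E \<in> eq_theory_lattice FF arF TT"
  shows "clone_congruence G ar A sg q (PsiE E)"
proof -
  have Et: "eq_theory FF arF E" and TE: "TT \<subseteq> E" using E by (auto simp: eq_theory_lattice_def)
  have eqv: "equiv A (PsiE E)"
  proof (rule equivI)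
    show "PsiE E \<subseteq> A \<times> A" using eqt_wf[OF Et] eval_A by (auto simp: PsiE_def)
    show "refl_on A (PsiE E)" unfolding refl_on_def PsiE_def
    proof
      fix x assume "x \<in> A"
      then obtain t where "wf t" "eval t = x" using eval_surj by blast
      then show "(x, x) \<in> {(eval t, eval u) |t u. (t, u) \<in> E}" using eqtD(2)[OF Et] by blast
    qed
    show "sym (PsiE E)" unfolding sym_def PsiE_def using eqtD(3)[OF Et] by blast
    show "trans (PsiE E)"
    proof (rule transI)
      fix x y z assume "(x, y) \<in> PsiE E" "(y, z) \<in> PsiE E"
      then obtain t u u' v where a: "x = eval t" "y = eval u" "(t, u) \<in> E" "y = eval u'" "z = eval v"
        "(u', v) \<in> E" by (auto simp: PsiE_def)
      then have "(u, u') \<in> TT" using eqt_wf[OF Et] by (auto simp: TT_def)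
      then have "(u, u') \<in> E" using TE by blast
      then have "(t, v) \<in> E" using a eqtD(4)[OF Et] by blast
      then show "(x, z) \<in> PsiE E" using a by (auto simp: PsiE_def)
    qed
  qed
  moreover have "(sg \<sigma> xs, sg \<sigma> ys) \<in> PsiE E"
    if hh: "\<sigma> \<in> G" "length xs = ar \<sigma>" "list_all2 (\<lambda>x y. (x, y) \<in> PsiE E) xs ys" for \<sigma> xs ys
  proof -
    obtain ts us where tu: "xs = map eval ts" "ys = map eval us" "list_all2 (\<lambda>t u. (t, u) \<in> E) ts us"
      using list_PsiE[OF hh(3)] by blast
    have l: "length ts = arF (Inl \<sigma>)" "length us = arF (Inl \<sigma>)" using tu hh list_all2_lengthD by fastforce+
    have "(Fn (Inl \<sigma>) ts, Fn (Inl \<sigma>) us) \<in> E" using eqtD(5)[OF Et _ l tu(3)] hh by simp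
    moreover have "eval (Fn (Inl \<sigma>) ts) = sg \<sigma> xs" "eval (Fn (Inl \<sigma>) us) = sg \<sigma> ys" using tu by auto
    ultimately show ?thesis unfolding PsiE_def
      by (intro CollectI exI[of _ "Fn (Inl \<sigma>) ts"] exI[of _ "Fn (Inl \<sigma>) us"]) auto
  qed
  moreover have "(q n x ys, q n x' ys') \<in> PsiE E"
    if hh: "(x, x') \<in> PsiE E" "length ys = n" "list_all2 (\<lambda>y y'. (y, y') \<in> PsiE E) ys ys'" for n x x' ys ys'
  proof -
    obtain us us' where tu: "ys = map eval us" "ys' = map eval us'" "list_all2 (\<lambda>t u. (t, u) \<in> E) us us'"
      using list_PsiE[OF hh(3)] by blast
    obtain t t' where tt: "x = eval t" "x' = eval t'" "(t, t') \<in> E" using hh(1) by (auto simp: PsiE_def)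
    have w: "\<forall>u\<in>set us. wf u" "\<forall>u\<in>set us'. wf u" using wf_of_list[OF Et tu(3)] by auto
    have wt: "wf t" "wf t'" using eqt_wf[OF Et tt(3)] by auto
    have len: "length us = n" "length us' = n" using tu hh list_all2_lengthD by fastforce+
    have "\<forall>i. (pad us i, pad us' i) \<in> E"
      using tu(3) eqtD(2)[OF Et] by (auto simp: pad_def list_all2_conv_all_nth)
    then have "(subst (pad us) t, subst (pad us') t') \<in> E" using eqt_subst_compat[OF Et tt(3)] by blast
    then show ?thesis using tu tt eval_pad[OF wt(1) w(1)] eval_pad[OF wt(2) w(2)] len
      by (auto simp: PsiE_def)
  qed
  ultimately show ?thesis unfolding clone_congruence_def by blast
qed

lemma PhiPsi2: "E \<in> eq_theory_lattice FF arF TT \<Longrightarrow> PhiR (PsiE E) = E"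
proof -
  assume E: "E \<in> eq_theory_lattice FF arF TT"
  have Et: "eq_theory FF arF E" and TE: "TT \<subseteq> E" using E by (auto simp: eq_theory_lattice_def)
  show ?thesis
  proof
    show "E \<subseteq> PhiR (PsiE E)" using eqt_wf[OF Et] by (auto simp: PsiE_def PhiR_def)
  next
    show "PhiR (PsiE E) \<subseteq> E"
    proof clarify
      fix t u assume "(t, u) \<in> PhiR (PsiE E)"
      then obtain t' u' where a: "wf t" "wf u" "eval t = eval t'" "eval u = eval u'" "(t', u') \<in> E"
        by (auto simp: PsiE_def PhiR_def)
      have "(t, t') \<in> TT" "(u', u) \<in> TT" using a eqt_wf[OF Et a(5)] by (auto simp: TT_def)
      then have "(t, t') \<in> E" "(u', u) \<in> E" using TE by auto
      then show "(t, u) \<in> E" using a(5) eqtD(4)[OF Et] by blast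
    qed
  qed
qed

lemma PsiPhi2: "clone_congruence G ar A sg q R \<Longrightarrow> PsiE (PhiR R) = R"
proof -
  assume R: "clone_congruence G ar A sg q R"
  have RA: "R \<subseteq> A \<times> A" using R unfolding clone_congruence_def equiv_def by blast
  show ?thesis
  proof
    show "PsiE (PhiR R) \<subseteq> R" by (auto simp: PsiE_def PhiR_def)
  next
    show "R \<subseteq> PsiE (PhiR R)"
    proof clarify
      fix x y assume xy: "(x, y) \<in> R"
      then have "x \<in> A" "y \<in> A" using RA by auto
      then obtain t u where "eval t = x" "wf t" "eval u = y" "wf u" using eval_surj by metis
      then show "(x, y) \<in> PsiE (PhiR R)" using xy by (auto simp: PsiE_def PhiR_def)
    qed
  qed
qed

lemma dir2:
  assumes "iso_to_set_lattice TYPE('a::lattice) (congruence_lattice G ar A sg q)"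
  shows "iso_to_set_lattice TYPE('a) (eq_theory_lattice FF arF TT)"
proof (rule iso_transfer[OF assms, where Phi = PhiR and Psi = PsiE])
  show "\<And>x. x \<in> congruence_lattice G ar A sg q \<Longrightarrow> PhiR x \<in> eq_theory_lattice FF arF TT"
    by (simp add: congruence_lattice_def PhiR_in)
  show "\<And>y. y \<in> eq_theory_lattice FF arF TT \<Longrightarrow> PsiE y \<in> congruence_lattice G ar A sg q"
    by (simp add: congruence_lattice_def PsiE_cong)
  show "\<And>x. x \<in> congruence_lattice G ar A sg q \<Longrightarrow> PsiE (PhiR x) = x"
    by (simp add: congruence_lattice_def PsiPhi2)
  show "\<And>y. y \<in> eq_theory_lattice FF arF TT \<Longrightarrow> PhiR (PsiE y) = y" by (rule PhiPsi2)
  show "\<And>x x'. x \<subseteq> x' \<Longrightarrow> PhiR x \<subseteq> PhiR x'" by (auto simp: PhiR_def)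
  show "\<And>y y'. y \<subseteq> y' \<Longrightarrow> PsiE y \<subseteq> PsiE y'" by (auto simp: PsiE_def)
qed

end

theorem theorem10p6:
  shows "((\<exists>(F :: 'f set) ar T. eq_theory F ar T \<and>
              iso_to_set_lattice TYPE('a::lattice) (eq_theory_lattice F ar T))
          \<longrightarrow> (\<exists>(G :: 'f set) ar' (A :: 'f trm set set) sg q e.
                 clone_algebra G ar' A sg q e \<and> finite_dimensional A q e \<and>
                 iso_to_set_lattice TYPE('a) (congruence_lattice G ar' A sg q)))
       \<and> ((\<exists>(G :: 'g set) ar (A :: 'c set) sg q e.
                 clone_algebra G ar A sg q e \<and> finite_dimensional A q e \<and>
                 iso_to_set_lattice TYPE('a) (congruence_lattice G ar A sg q))
          \<longrightarrow> (\<exists>(F :: ('g + 'c) set) ar' T. eq_theory F ar' T \<and>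
                 iso_to_set_lattice TYPE('a) (eq_theory_lattice F ar' T)))"
proof (intro conjI impI)
  assume "\<exists>(F :: 'f set) ar T. eq_theory F ar T \<and>
              iso_to_set_lattice TYPE('a::lattice) (eq_theory_lattice F ar T)"
  then obtain F :: "'f set" and ar T where T: "eq_theory F ar T"
    and iso: "iso_to_set_lattice TYPE('a::lattice) (eq_theory_lattice F ar T)" by blast
  interpret D1 F ar T by (rule D1.intro[OF T])
  show "\<exists>(G :: 'f set) ar' (A :: 'f trm set set) sg q e.
                 clone_algebra G ar' A sg q e \<and> finite_dimensional A q e \<and>
                 iso_to_set_lattice TYPE('a) (congruence_lattice G ar' A sg q)"
    using clone fin_dim dir1[OF iso] by blast
next
  assume "\<exists>(G :: 'g set) ar (A :: 'c set) sg q e.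
                 clone_algebra G ar A sg q e \<and> finite_dimensional A q e \<and>
                 iso_to_set_lattice TYPE('a) (congruence_lattice G ar A sg q)"
  then obtain G :: "'g set" and ar and A :: "'c set" and sg q e where
    CA: "clone_algebra G ar A sg q e" and FD: "finite_dimensional A q e"
    and iso: "iso_to_set_lattice TYPE('a) (congruence_lattice G ar A sg q)" by blast
  interpret D2 G ar A sg q e by (rule D2.intro[OF CA FD])
  show "\<exists>(F :: ('g + 'c) set) ar' T. eq_theory F ar' T \<and>
                 iso_to_set_lattice TYPE('a) (eq_theory_lattice F ar' T)"
    using TT_eqt dir2[OF iso] by blast
qed

end
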